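(* Let $z_1,\dots,z_N$ be independent with $z_i\sim\mathrm{Bernoulli}(q_i)$, $0<q_i<1$ for every $i\in[N]$, and let $S=\sum_{i=1}^Nz_i$. If $\min_{i\in[N]}q_i>\frac1N$, then $\Pr\{S>N\min_{i\in[N]}q_i\}>\frac14$. *)

theory Defs
  imports "HOL-Probability.Probability"
begin

end

theory Submission
  imports Defs
begin


fun tailp :: "(nat \<Rightarrow> real) \<Rightarrow> nat \<Rightarrow> nat \<Rightarrow> real" where
  "tailp q 0 j = (if j = 0 then 1 else 0)"
| "tailp q (Suc n) 0 = 1"
| "tailp q (Suc n) (Suc j) = (1 - q (Suc n)) * tailp q n (Suc j) + q (Suc n) * tailp q n j"

lemma tailp_0[simp]: "tailp q n 0 = 1"
  by (cases n) auto

lemma tailp_bounds: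
  assumes "\<forall>i\<in>{1..n}. 0 \<le> q i \<and> q i \<le> 1"
  shows "0 \<le> tailp q n j \<and> tailp q n j \<le> 1"
  using assms
proof (induction n arbitrary: j)
  case 0 then show ?case by simp
next
  case (Suc n)
  have h: "\<forall>i\<in>{1..n}. 0 \<le> q i \<and> q i \<le> 1" using Suc.prems by auto
  have qq: "0 \<le> q (Suc n)" "q (Suc n) \<le> 1" using Suc.prems by auto
  show ?case
  proof (cases j)
    case 0 then show ?thesis by simp
  next
    case (Suc j')
    have a: "0 \<le> tailp q n (Suc j')" "tailp q n (Suc j') \<le> 1" using Suc.IH[OF h] by auto
    have b: "0 \<le> tailp q n j'" "tailp q n j' \<le> 1" using Suc.IH[OF h] by auto
    have "(1 - q (Suc n)) * tailp q n (Suc j') \<le> (1 - q (Suc n)) * 1"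
      using a qq by (intro mult_left_mono) auto
    moreover have "q (Suc n) * tailp q n j' \<le> q (Suc n) * 1"
      using b qq by (intro mult_left_mono) auto
    ultimately show ?thesis using a b qq Suc by (simp add: mult_nonneg_nonneg)
  qed
qed

lemma tailp_anti:
  assumes "\<forall>i\<in>{1..n}. 0 \<le> q i \<and> q i \<le> 1"
  shows "tailp q n (Suc j) \<le> tailp q n j"
  using assms
proof (induction n arbitrary: j)
  case 0 then show ?case by simp
next
  case (Suc n)
  have h: "\<forall>i\<in>{1..n}. 0 \<le> q i \<and> q i \<le> 1" using Suc.prems by auto
  have qq: "0 \<le> q (Suc n)" "q (Suc n) \<le> 1" using Suc.prems by auto
  show ?case
  proof (cases j)
    case 0 then show ?thesis using tailp_bounds[OF Suc.prems, of 1] by simp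
  next
    case (Suc j')
    have "(1 - q (Suc n)) * tailp q n (Suc (Suc j')) \<le> (1 - q (Suc n)) * tailp q n (Suc j')"
      using Suc.IH[OF h] qq by (intro mult_left_mono) auto
    moreover have "q (Suc n) * tailp q n (Suc j') \<le> q (Suc n) * tailp q n j'"
      using Suc.IH[OF h] qq by (intro mult_left_mono) auto
    ultimately show ?thesis using Suc by simp
  qed
qed

lemma tailp_mono:
  assumes "\<forall>i\<in>{1..n}. 0 \<le> p i \<and> p i \<le> q i \<and> q i \<le> 1"
  shows "tailp p n j \<le> tailp q n j"
  using assms
proof (induction n arbitrary: j)
  case 0 then show ?case by simp
next
  case (Suc n)
  have h: "\<forall>i\<in>{1..n}. 0 \<le> p i \<and> p i \<le> q i \<and> q i \<le> 1" using Suc.prems by auto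
  have hq: "\<forall>i\<in>{1..n}. 0 \<le> q i \<and> q i \<le> 1" 
  proof
    fix i assume "i \<in> {1..n}"
    then have "0 \<le> p i \<and> p i \<le> q i \<and> q i \<le> 1" using Suc.prems by auto
    then show "0 \<le> q i \<and> q i \<le> 1" by linarith
  qed
  have qq: "0 \<le> p (Suc n)" "p (Suc n) \<le> q (Suc n)" "q (Suc n) \<le> 1" using Suc.prems by auto
  show ?case
  proof (cases j)
    case 0 then show ?thesis by simp
  next
    case (Suc j')
    have "(1 - p (Suc n)) * tailp p n (Suc j') + p (Suc n) * tailp p n j'
       \<le> (1 - p (Suc n)) * tailp q n (Suc j') + p (Suc n) * tailp q n j'"
      using Suc.IH[OF h] qq by (intro add_mono mult_left_mono) auto
    also have "\<dots> \<le> (1 - q (Suc n)) * tailp q n (Suc j') + q (Suc n) * tailp q n j'"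
    proof -
      have "tailp q n (Suc j') \<le> tailp q n j'" by (rule tailp_anti[OF hq])
      then have "(q (Suc n) - p (Suc n)) * tailp q n (Suc j') \<le> (q (Suc n) - p (Suc n)) * tailp q n j'"
        using qq by (intro mult_left_mono) auto
      then show ?thesis by (simp add: algebra_simps)
    qed
    finally show ?thesis using Suc by simp
  qed
qed

lemma tailp_cong:
  assumes "\<forall>i\<in>{1..n}. p i = q i"
  shows "tailp p n j = tailp q n j"
  using assms
proof (induction n arbitrary: j)
  case 0 then show ?case by simp
next
  case (Suc n)
  have h: "\<forall>i\<in>{1..n}. p i = q i" using Suc.prems by auto
  have qq: "p (Suc n) = q (Suc n)" using Suc.prems by auto
  show ?case using Suc.IH[OF h] qq by (cases j) auto
qed

lemma tailp_big: "n < j \<Longrightarrow> tailp q n j = 0"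
proof (induction n arbitrary: j)
  case 0 then show ?case by simp
next
  case (Suc n)
  then obtain j' where "j = Suc j'" "n < j'" by (cases j) auto
  then show ?case using Suc.IH by simp
qed

definition ta :: "real \<Rightarrow> nat \<Rightarrow> nat \<Rightarrow> real" where
  "ta a n j = tailp (\<lambda>_. a) n j"

definition pm :: "real \<Rightarrow> nat \<Rightarrow> nat \<Rightarrow> real" where
  "pm a n j = ta a n j - ta a n (Suc j)"

lemma ta_simps:
  "ta a 0 j = (if j = 0 then 1 else 0)"
  "ta a n 0 = 1"
  "ta a (Suc n) (Suc j) = (1 - a) * ta a n (Suc j) + a * ta a n j"
  by (simp_all add: ta_def)

lemma pm_rec:
  "pm a (Suc n) 0 = (1 - a) * pm a n 0"
  "pm a (Suc n) (Suc j) = (1 - a) * pm a n (Suc j) + a * pm a n j"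
  by (simp_all add: pm_def ta_simps algebra_simps)

lemma pm_closed: "pm a n j = real (n choose j) * a ^ j * (1 - a) ^ (n - j)"
proof (induction n arbitrary: j)
  case 0 then show ?case by (simp add: pm_def ta_simps)
next
  case (Suc n)
  show ?case
  proof (cases j)
    case 0 then show ?thesis using Suc.IH[of 0] by (simp add: pm_rec)
  next
    case (Suc j')
    have "pm a (Suc n) j = (1 - a) * pm a n (Suc j') + a * pm a n j'" using Suc by (simp add: pm_rec)
    also have "\<dots> = (1 - a) * (real (n choose Suc j') * a ^ Suc j' * (1 - a) ^ (n - Suc j'))
        + a * (real (n choose j') * a ^ j' * (1 - a) ^ (n - j'))" using Suc.IH by simp
    also have "\<dots> = real (Suc n choose j) * a ^ j * (1 - a) ^ (Suc n - j)"
    proof (cases "Suc j' \<le> n")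
      case True
      have e: "(1 - a) ^ (n - j') = (1 - a) * (1 - a) ^ (n - Suc j')"
        using True by (metis Suc_diff_Suc Suc_le_lessD power_Suc)
      show ?thesis unfolding Suc binomial_Suc_Suc diff_Suc_Suc e by (simp add: algebra_simps)
    next
      case False
      then have "n choose Suc j' = 0" by simp
      moreover have "n - j' = 0" "Suc n - j = 0" using False Suc by auto
      ultimately show ?thesis using Suc False by (simp add: algebra_simps)
    qed
    finally show ?thesis .
  qed
qed

lemma pm_n_rec: "real n * pm a n j = (1 - a) * (real n * pm a (n - 1) j) + a * (if j = 0 then 0 else real n * pm a (n - 1) (j - 1))"
proof (cases n)
  case 0 then show ?thesis by simp
next
  case (Suc m)
  then show ?thesis by (cases j) (simp_all add: pm_rec algebra_simps)
qed

lemma ta_deriv: "((\<lambda>a. ta a n j) has_real_derivative (if j = 0 then 0 else real n * pm a (n - 1) (j - 1))) (at a)"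
proof (induction n arbitrary: j a)
  case 0
  show ?case by (simp add: ta_simps)
next
  case (Suc n)
  show ?case
  proof (cases j)
    case 0 then show ?thesis by (simp add: ta_simps)
  next
    case (Suc j')
    have f: "(\<lambda>a. ta a (Suc n) j) = (\<lambda>a. (1 - a) * ta a n (Suc j') + a * ta a n j')"
      using Suc by (simp add: ta_simps)
    have d1: "((\<lambda>a. ta a n (Suc j')) has_real_derivative (real n * pm a (n - 1) j')) (at a)"
      using Suc.IH[of "Suc j'" a] by simp
    have d0: "((\<lambda>a. ta a n j') has_real_derivative (if j' = 0 then 0 else real n * pm a (n - 1) (j' - 1))) (at a)"
      by (rule Suc.IH)
    have "((\<lambda>a. (1 - a) * ta a n (Suc j') + a * ta a n j') has_real_derivative
       ((1 - a) * (real n * pm a (n - 1) j') + (0 - 1) * ta a n (Suc j') +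
        (a * (if j' = 0 then 0 else real n * pm a (n - 1) (j' - 1)) + 1 * ta a n j'))) (at a)"
      by (intro DERIV_add DERIV_mult' DERIV_diff DERIV_const DERIV_ident d1 d0)
    then show ?thesis unfolding f
    proof (rule DERIV_cong)
      show "(1 - a) * (real n * pm a (n - 1) j') + (0 - 1) * ta a n (Suc j') +
        (a * (if j' = 0 then 0 else real n * pm a (n - 1) (j' - 1)) + 1 * ta a n j') =
        (if j = 0 then 0 else real (Suc n) * pm a (Suc n - 1) (j - 1))"
        using Suc pm_n_rec[of n a j'] by (simp add: pm_def algebra_simps)
    qed
  qed
qed

lemma pm_nonneg: "0 \<le> a \<Longrightarrow> a \<le> 1 \<Longrightarrow> 0 \<le> pm a n j"
  by (simp add: pm_closed)

lemma pm_ratio: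
  assumes "1 \<le> k" "0 \<le> a" "a < 1" "real (m + 1) * a \<le> real k"
  shows "pm a m k \<le> pm a m (k - 1)"
proof (cases "k \<le> m")
  case False
  then have "pm a m k = 0" by (simp add: pm_closed)
  then show ?thesis using pm_nonneg[of a m "k - 1"] assms by simp
next
  case True
  obtain k' where k': "k = Suc k'" using assms by (cases k) auto
  have c: "real k * real (m choose k) = real (m - k + 1) * real (m choose (k - 1))"
  proof -
    have "(m choose Suc k') * Suc k' = (m choose k') * (m - k')"
      using binomial_absorption[of k' m] binomial_absorb_comp[of m k'] by (simp add: mult.commute)
    then have h: "real (m choose Suc k') * real (Suc k') = real (m choose k') * real (m - k')"
      by (metis of_nat_mult)
    have e: "m - Suc k' + 1 = m - k'" using k' True by simp
    show ?thesis unfolding k' e using h by (simp add: mult.commute)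
  qed
  have key: "real k * (1 - a) * pm a m k = real (m - k + 1) * a * pm a m (k - 1)"
  proof -
    have e1: "(1 - a) ^ (m - (k - 1)) = (1 - a) * (1 - a) ^ (m - k)"
      using True k' by (metis Suc_diff_le diff_Suc_Suc power_Suc diff_Suc_1)
    have e2: "a ^ k = a * a ^ (k - 1)" using k' by simp
    have L: "real k * (1 - a) * pm a m k = (real k * real (m choose k)) * (a ^ k * ((1 - a) * (1 - a) ^ (m - k)))"
      unfolding pm_closed by (simp only: mult_ac)
    have R: "real (m - k + 1) * a * pm a m (k - 1) = (real (m - k + 1) * real (m choose (k - 1))) * ((a * a ^ (k - 1)) * (1 - a) ^ (m - (k - 1)))"
      unfolding pm_closed by (simp only: mult_ac)
    show ?thesis by (simp only: L R c e1 e2[symmetric])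
  qed
  have "real (m - k + 1) * a \<le> real k * (1 - a)"
    using assms True by (simp add: of_nat_diff algebra_simps)
  then have "real (m - k + 1) * a * pm a m (k - 1) \<le> real k * (1 - a) * pm a m (k - 1)"
    using pm_nonneg[of a m "k - 1"] assms by (intro mult_right_mono) auto
  then have "real k * (1 - a) * pm a m k \<le> real k * (1 - a) * pm a m (k - 1)" using key by simp
  moreover have "0 < real k * (1 - a)" using assms by simp
  ultimately show ?thesis by (meson mult_left_le_imp_le)
qed

lemma G_step:
  assumes k: "1 \<le> k" "k \<le> m"
  shows "ta (real k / real (Suc m)) (Suc m) (Suc k) \<le> ta (real k / real (Suc (Suc m))) (Suc (Suc m)) (Suc k)"
proof -
  define n where "n = Suc m"
  define g where "g b = (real k - b) / real n" for b
  define psi where "psi b = (1 - b) * ta (g b) n (Suc k) + b * ta (g b) n k" for b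
  define c where "c = real k / real (Suc n)"
  have n0: "real n > 0" unfolding n_def by simp
  have p0: "psi 0 = ta (real k / real n) n (Suc k)" by (simp add: psi_def g_def)
  have gc: "g c = c"
  proof -
    have "real k - real k / real (Suc n) = real k * real n / real (Suc n)" by (simp add: field_simps)
    then show ?thesis unfolding g_def c_def using n0 by simp
  qed
  have p1: "psi c = ta c (Suc n) (Suc k)" unfolding psi_def gc by (simp add: ta_simps)
  have "psi 0 \<le> psi c"
  proof (rule DERIV_nonneg_imp_nondecreasing[of 0 c psi])
    show "0 \<le> c" unfolding c_def by simp
    fix b assume b: "0 \<le> b" "b \<le> c"
    define a where "a = g b"
    have dg: "(g has_real_derivative (- 1 / real n)) (at b)"
      unfolding g_def[abs_def] by (rule DERIV_cong[OF DERIV_cdivide[OF DERIV_diff[OF DERIV_const DERIV_ident]]]) simp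
    have d1: "((\<lambda>b. ta (g b) n (Suc k)) has_real_derivative (- 1 / real n) * (real n * pm (g b) (n - 1) k)) (at b)"
      using DERIV_chain3[of "\<lambda>a. ta a n (Suc k)" "\<lambda>a. real n * pm a (n - 1) k" g "- 1 / real n" b] dg ta_deriv[of n "Suc k"]
      by simp
    have d0: "((\<lambda>b. ta (g b) n k) has_real_derivative (- 1 / real n) * (real n * pm (g b) (n - 1) (k - 1))) (at b)"
      using DERIV_chain3[of "\<lambda>a. ta a n k" "\<lambda>a. real n * pm a (n - 1) (k - 1)" g "- 1 / real n" b] dg ta_deriv[of n k] k
      by simp
    have D: "(psi has_real_derivative
       ((1 - b) * ((- 1 / real n) * (real n * pm a (n - 1) k)) + (0 - 1) * ta a n (Suc k) +
        (b * ((- 1 / real n) * (real n * pm a (n - 1) (k - 1))) + 1 * ta a n k))) (at b)"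
      unfolding psi_def[abs_def] a_def
      by (intro DERIV_add DERIV_mult' DERIV_diff DERIV_const DERIV_ident d1 d0)
    have simpD: "(1 - b) * ((- 1 / real n) * (real n * pm a (n - 1) k)) + (0 - 1) * ta a n (Suc k) +
        (b * ((- 1 / real n) * (real n * pm a (n - 1) (k - 1))) + 1 * ta a n k)
      = (a - b) * (pm a m (k - 1) - pm a m k)"
    proof -
      obtain k' where k': "k = Suc k'" using k by (cases k) auto
      have "ta a n k - ta a n (Suc k) = pm a n k" by (simp add: pm_def)
      also have "\<dots> = (1 - a) * pm a m k + a * pm a m (k - 1)" unfolding n_def k' by (simp add: pm_rec)
      finally have T: "ta a n k = ta a n (Suc k) + ((1 - a) * pm a m k + a * pm a m (k - 1))" by simp
      have cancel: "\<And>X. (- 1 / real n) * (real n * X) = - X" using n0 by simp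
      have nm: "n - 1 = m" by (simp add: n_def)
      show ?thesis unfolding cancel nm T by (simp add: algebra_simps)
    qed
    have ab: "b \<le> a" using b n0 unfolding a_def g_def c_def n_def by (simp add: field_simps)
    have ck: "c \<le> real k"
    proof -
      have "real k / real (Suc n) \<le> real k / 1" by (rule divide_left_mono) auto
      then show ?thesis unfolding c_def by simp
    qed
    have a0: "0 \<le> a" using b ck n0 unfolding a_def g_def by simp
    have a1: "a < 1" using b k n0 unfolding a_def g_def c_def n_def by (simp add: field_simps)
    have am: "real (m + 1) * a \<le> real k" using b k n0 unfolding a_def g_def c_def n_def by (simp add: field_simps)
    have "pm a m k \<le> pm a m (k - 1)" by (rule pm_ratio) (use k a0 a1 am in auto)
    then have "0 \<le> (a - b) * (pm a m (k - 1) - pm a m k)" using ab by simp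
    then show "\<exists>y. (psi has_real_derivative y) (at b) \<and> 0 \<le> y" using D unfolding simpD by blast
  qed
  then show ?thesis using p0 p1 unfolding n_def c_def by simp
qed



lemma ta_diag: "ta a n n = a ^ n"
proof -
  have "pm a n n = a ^ n" by (simp add: pm_closed)
  moreover have "ta a n (Suc n) = 0" unfolding ta_def by (rule tailp_big) simp
  ultimately show ?thesis by (simp add: pm_def)
qed

lemma G_mono:
  assumes "1 \<le> k" "Suc k \<le> n0" "n0 \<le> n"
  shows "ta (real k / real n0) n0 (Suc k) \<le> ta (real k / real n) n (Suc k)"
  using assms(3)
proof (induction n rule: dec_induct)
  case base then show ?case by simp
next
  case (step n)
  then obtain m where m: "n = Suc m" "k \<le> m" using assms(2) by (cases n) auto
  have "ta (real k / real n) n (Suc k) \<le> ta (real k / real (Suc n)) (Suc n) (Suc k)"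
    unfolding m by (rule G_step) (use assms m step in auto)
  then show ?case using step.IH by simp
qed

lemma t1:
  fixes y d :: real assumes y: "y > 0" and d: "d = y*(y+2)"
  shows "y/(y+1) * (1 + 1/d) = (y+1)/(y+2)"
proof -
  have dp: "d > 0" using y d by simp
  have A: "y/(y+1) * (1 + 1/d) = (y * (d + 1)) / ((y+1) * d)" using y dp by (simp add: field_simps)
  have B: "y * (d + 1) = ((y+1)/(y+2)) * ((y+1) * d)" unfolding d using y by (simp add: field_simps)
  have C: "(y+1) * d \<noteq> 0" using y dp by simp
  show ?thesis unfolding A B using C by simp
qed
lemma t2:
  fixes y d :: real assumes y: "y > 0" and d: "d = y*(y+2)"
  shows "1 \<le> (y+1)/(y+2) * (1 + (y+1) * (1/d))"
proof -
  have dp: "d > 0" using y d by simp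
  have A: "(y+1)/(y+2) * (1 + (y+1) * (1/d)) = ((y+1) * (d + y + 1)) / ((y+2) * d)" using y dp by (simp add: field_simps)
  have B: "(y+2) * d \<le> (y+1) * (d + y + 1)" unfolding d using y by (simp add: algebra_simps)
  have C: "(y+2) * d > 0" using y dp by simp
  show ?thesis unfolding A using B C by simp
qed

lemma r_step:
  assumes "1 \<le> k"
  shows "(real k / real (Suc k)) ^ Suc k \<le> (real (Suc k) / real (Suc (Suc k))) ^ Suc (Suc k)"
proof -
  define y where "y = real k"
  define d where "d = y * (y + 2)"
  define u where "u = y / (y + 1)"
  define v where "v = (y + 1) / (y + 2)"
  define x where "x = 1 / d"
  have y0: "y > 0" using assms unfolding y_def by simp
  have x0: "x \<ge> 0" unfolding x_def d_def using y0 by simp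
  have vu: "v = u * (1 + x)" unfolding u_def v_def x_def using t1[OF y0 d_def] by simp
  have u0: "u \<ge> 0" "v \<ge> 0" unfolding u_def v_def using y0 by simp_all
  have B: "1 + real (Suc k) * x \<le> (1 + x) ^ Suc k" by (rule Bernoulli_inequality) (use x0 in simp)
  have vx: "1 \<le> v * (1 + real (Suc k) * x)" unfolding v_def x_def using t2[OF y0 d_def] by (simp add: y_def add.commute)
  have "u ^ Suc k \<le> v * (1 + real (Suc k) * x) * u ^ Suc k"
    using mult_right_mono[OF vx zero_le_power[OF u0(1), of "Suc k"]] by simp
  also have "\<dots> \<le> v * (1 + x) ^ Suc k * u ^ Suc k"
    using B u0 by (intro mult_right_mono mult_left_mono) auto
  also have "\<dots> = v * (u * (1 + x)) ^ Suc k" by (simp only: power_mult_distrib mult_ac)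
  also have "\<dots> = v ^ Suc (Suc k)" using vu by simp
  finally show ?thesis unfolding u_def v_def y_def by (simp add: add.commute)
qed

lemma r_bound:
  assumes "2 \<le> k"
  shows "8 / 27 \<le> (real k / real (Suc k)) ^ Suc k"
  using assms
proof (induction k rule: dec_induct)
  case base then show ?case by (simp add: power_divide)
next
  case (step n)
  then show ?case by (intro order.trans[OF step.IH r_step]) simp
qed

lemma G3: "ta (1 / 3) 3 2 = 7 / 27"
  by (simp add: ta_def numeral_eq_Suc)

context prob_space begin

lemma indep_step:
  assumes ind: "indep_vars (\<lambda>_. count_space UNIV) z {1..N}" and n: "Suc n \<le> N"
  shows "prob {x\<in>space M. P (card {i\<in>{1..n}. z i x}) \<and> z (Suc n) x = b}
       = prob {x\<in>space M. P (card {i\<in>{1..n}. z i x})} * prob {x\<in>space M. z (Suc n) x = b}"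
proof -
  have I: "indep_var (PiM {1..n} (\<lambda>_. count_space UNIV)) (\<lambda>\<omega>. restrict (\<lambda>i. z i \<omega>) {1..n})
                     (PiM {Suc n} (\<lambda>_. count_space UNIV)) (\<lambda>\<omega>. restrict (\<lambda>i. z i \<omega>) {Suc n})"
    by (rule indep_var_restrict[OF ind]) (use n in auto)
  have m: "{i\<in>{1..n}. f i} = {i\<in>{1..n}. i \<in> {1..n} \<and> f i}" for f :: "nat \<Rightarrow> bool" by auto
  have sa: "{f\<in>space (PiM {1..n} (\<lambda>_. count_space UNIV)). P (card {i\<in>{1..n}. f i})} \<in> sets (PiM {1..n} (\<lambda>_. count_space UNIV))"
  proof -
    have "(\<lambda>f. card {i\<in>{1..n}. f i}) \<in> measurable (PiM {1..n} (\<lambda>_. count_space UNIV)) (count_space UNIV)"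
    proof (rule measurable_card)
      fix i
      show "{x \<in> space (PiM {1..n} (\<lambda>_. count_space UNIV)). i \<in> {i \<in> {1..n}. x i}} \<in> sets (PiM {1..n} (\<lambda>_. count_space UNIV))"
      proof (cases "i \<in> {1..n}")
        case True
        then show ?thesis by measurable
      next
        case False
        then show ?thesis by simp
      qed
    qed
    then have "(\<lambda>f. P (card {i\<in>{1..n}. f i})) \<in> measurable (PiM {1..n} (\<lambda>_. count_space UNIV)) (count_space UNIV)"
      by (rule measurable_compose) simp
    then show ?thesis by (simp add: pred_def)
  qed
  have sb: "{f\<in>space (PiM {Suc n} (\<lambda>_. count_space UNIV)). f (Suc n) = b} \<in> sets (PiM {Suc n} (\<lambda>_. count_space UNIV))"
    by measurable
  have rc: "\<And>x. {i\<in>{1..n}. restrict (\<lambda>i. z i x) {1..n} i} = {i\<in>{1..n}. z i x}" by auto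
  have e1: "(\<lambda>x. (restrict (\<lambda>i. z i x) {1..n}, restrict (\<lambda>i. z i x) {Suc n})) -`
     ({f\<in>space (PiM {1..n} (\<lambda>_. count_space UNIV)). P (card {i\<in>{1..n}. f i})} \<times>
      {f\<in>space (PiM {Suc n} (\<lambda>_. count_space UNIV)). f (Suc n) = b}) \<inter> space M
     = {x\<in>space M. P (card {i\<in>{1..n}. z i x}) \<and> z (Suc n) x = b}"
    by (rule set_eqI, simp only: vimage_eq Int_iff mem_Collect_eq mem_Times_iff fst_conv snd_conv rc) (auto simp: space_PiM)
  have e2: "(\<lambda>x. restrict (\<lambda>i. z i x) {1..n}) -` {f\<in>space (PiM {1..n} (\<lambda>_. count_space UNIV)). P (card {i\<in>{1..n}. f i})} \<inter> space M
     = {x\<in>space M. P (card {i\<in>{1..n}. z i x})}"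
    by (rule set_eqI, simp only: vimage_eq Int_iff mem_Collect_eq mem_Times_iff fst_conv snd_conv rc) (auto simp: space_PiM)
  have e3: "(\<lambda>x. restrict (\<lambda>i. z i x) {Suc n}) -` {f\<in>space (PiM {Suc n} (\<lambda>_. count_space UNIV)). f (Suc n) = b} \<inter> space M
     = {x\<in>space M. z (Suc n) x = b}"
    by (auto simp: space_PiM)
  show ?thesis using indep_varD[OF I sa sb] unfolding e1 e2 e3 .
qed

lemma card_split: "card {i\<in>{1..Suc n}. z i x} = card {i\<in>{1..n}. z i x} + (if z (Suc n) x then 1 else 0)"
proof -
  have "{i\<in>{1..Suc n}. z i x} = {i\<in>{1..n}. z i x} \<union> (if z (Suc n) x then {Suc n} else {})"
    by (auto simp: le_Suc_eq)
  then show ?thesis by (simp add: card_Un_disjoint)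
qed

lemma tail_prob:
  assumes ind: "indep_vars (\<lambda>_. count_space UNIV) z {1..N}"
    and q: "\<And>i. i \<in> {1..N} \<Longrightarrow> prob {x\<in>space M. z i x} = q i"
  shows "n \<le> N \<Longrightarrow> prob {x\<in>space M. j \<le> card {i\<in>{1..n}. z i x}} = tailp q n j"
proof (induction n arbitrary: j)
  case 0
  then show ?case by (cases j) (auto simp: prob_space)
next
  case (Suc n)
  have zm: "z i \<in> measurable M (count_space UNIV)" if "i \<in> {1..N}" for i
    using ind that by (auto simp: indep_vars_def)
  have cm: "(\<lambda>x. card {i\<in>{1..n}. z i x}) \<in> measurable M (count_space UNIV)"
  proof (rule measurable_card)
    fix i
    show "{x \<in> space M. i \<in> {i \<in> {1..n}. z i x}} \<in> sets M"
    proof (cases "i \<in> {1..n}")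
      case True
      then have "i \<in> {1..N}" using Suc.prems by auto
      then have [measurable]: "z i \<in> measurable M (count_space UNIV)" by (rule zm)
      show ?thesis using True by simp
    next
      case False
      then have "{x \<in> space M. i \<in> {i \<in> {1..n}. z i x}} = {}" by blast
      then show ?thesis by (simp only: sets.empty_sets)
    qed
  qed
  have zSm[measurable]: "z (Suc n) \<in> measurable M (count_space UNIV)" using Suc.prems by (intro zm) auto
  have ev: "{x\<in>space M. P (card {i\<in>{1..n}. z i x}) \<and> z (Suc n) x = b} \<in> events" for P b
  proof -
    have "(\<lambda>x. (P (card {i\<in>{1..n}. z i x}) \<and> z (Suc n) x = b)) \<in> measurable M (count_space UNIV)"
      using cm by measurable
    from measurable_sets[OF this sets_UNIV[of "{True}"]]
    have "(\<lambda>x. (P (card {i\<in>{1..n}. z i x}) \<and> z (Suc n) x = b)) -` {True} \<inter> space M \<in> events" by blast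
    moreover have "(\<lambda>x. (P (card {i\<in>{1..n}. z i x}) \<and> z (Suc n) x = b)) -` {True} \<inter> space M = {x\<in>space M. P (card {i\<in>{1..n}. z i x}) \<and> z (Suc n) x = b}"
      by blast
    ultimately show ?thesis by (simp only:)
  qed
  have st: "prob {x\<in>space M. P (card {i\<in>{1..n}. z i x}) \<and> z (Suc n) x = b}
       = prob {x\<in>space M. P (card {i\<in>{1..n}. z i x})} * prob {x\<in>space M. z (Suc n) x = b}" for P b
    by (rule indep_step[OF ind Suc.prems])
  have qS: "prob {x\<in>space M. z (Suc n) x = True} = q (Suc n)" using q[of "Suc n"] Suc.prems by simp
  have qF: "prob {x\<in>space M. z (Suc n) x = False} = 1 - q (Suc n)"
  proof -
    have "{x\<in>space M. z (Suc n) x = False} = space M - {x\<in>space M. z (Suc n) x}" by auto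
    moreover have "{x\<in>space M. z (Suc n) x} \<in> events" by measurable
    ultimately show ?thesis using prob_compl qS by simp
  qed
  show ?case
  proof (cases j)
    case 0
    then show ?thesis by (simp add: prob_space)
  next
    case (Suc j')
    have E: "{x\<in>space M. j \<le> card {i\<in>{1..Suc n}. z i x}} =
       {x\<in>space M. Suc j' \<le> card {i\<in>{1..n}. z i x} \<and> z (Suc n) x = False} \<union>
       {x\<in>space M. j' \<le> card {i\<in>{1..n}. z i x} \<and> z (Suc n) x = True}"
      unfolding card_split Suc by auto
    have "prob {x\<in>space M. j \<le> card {i\<in>{1..Suc n}. z i x}} =
       prob {x\<in>space M. Suc j' \<le> card {i\<in>{1..n}. z i x} \<and> z (Suc n) x = False} +
       prob {x\<in>space M. j' \<le> card {i\<in>{1..n}. z i x} \<and> z (Suc n) x = True}"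
      unfolding E by (rule finite_measure_Union[OF ev ev]) auto
    also have "\<dots> = tailp q n (Suc j') * (1 - q (Suc n)) + tailp q n j' * q (Suc n)"
      unfolding st qS qF using Suc.IH Suc.prems by simp
    finally show ?thesis using Suc by simp
  qed
qed

end

theorem lemma11:
  fixes M :: "'a measure" and N :: nat and q :: "nat \<Rightarrow> real"
    and z :: "nat \<Rightarrow> 'a \<Rightarrow> bool"
  assumes "prob_space M"
    and "N \<ge> 1"
    and "prob_space.indep_vars M (\<lambda>_. count_space UNIV) z {1..N}"
    and "\<And>i. i \<in> {1..N} \<Longrightarrow> prob_space.prob M {x \<in> space M. z i x} = q i"
    and "\<And>i. i \<in> {1..N} \<Longrightarrow> 0 < q i \<and> q i < 1"
    and "(MIN i\<in>{1..N}. q i) > 1 / real N"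
  shows "prob_space.prob M
           {x \<in> space M. (\<Sum>i=1..N. (if z i x then 1 else 0 :: real)) > real N * (MIN i\<in>{1..N}. q i)}
         > 1 / 4"
proof -
  interpret prob_space M by (rule assms(1))
  define p where "p = (MIN i\<in>{1..N}. q i)"
  have fin: "finite {1..N}" "{1..N} \<noteq> {}" using assms(2) by auto
  have pq: "p \<le> q i" if "i \<in> {1..N}" for i unfolding p_def using fin that by simp
  obtain i0 where i0: "i0 \<in> {1..N}" "p = q i0" unfolding p_def using fin by (metis (no_types, lifting) Min_in finite_imageI image_iff image_is_empty)
  have p1: "p < 1" using i0 assms(5) by auto
  have N0: "real N > 0" using assms(2) by simp
  have pN: "real N * p > 1" using assms(6) N0 unfolding p_def[symmetric] by (simp add: field_simps)
  have pN2: "real N * p < real N" using p1 N0 by simp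
  define k where "k = nat \<lfloor>real N * p\<rfloor>"
  have fl: "real_of_int \<lfloor>real N * p\<rfloor> \<le> real N * p" "real N * p < real_of_int \<lfloor>real N * p\<rfloor> + 1"
    by linarith+
  have fl0: "\<lfloor>real N * p\<rfloor> \<ge> 1" using pN by linarith
  have kr: "real k = real_of_int \<lfloor>real N * p\<rfloor>" unfolding k_def using fl0 by simp
  have "real k \<ge> 1" using kr fl0 by linarith
  then have k1: "1 \<le> k" by simp
  have kle: "real k \<le> real N * p" "real N * p < real k + 1" using fl kr by auto
  have kN: "k < N"
  proof -
    have "real k < real N" using kle pN2 by linarith
    then show ?thesis by simp
  qed
  have E: "{x \<in> space M. (\<Sum>i=1..N. (if z i x then 1 else 0 :: real)) > real N * p}
        = {x \<in> space M. Suc k \<le> card {i\<in>{1..N}. z i x}}"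
  proof -
    have s: "(\<Sum>i=1..N. (if z i x then 1 else 0 :: real)) = real (card {i\<in>{1..N}. z i x})" for x
    proof -
      have "(\<Sum>i=1..N. (if z i x then 1 else 0 :: real)) = (\<Sum>i\<in>{i\<in>{1..N}. z i x}. 1)"
        by (rule sum.inter_filter[symmetric]) simp
      then show ?thesis by simp
    qed
    have c: "real N * p < real c \<longleftrightarrow> Suc k \<le> c" for c :: nat
    proof
      assume "real N * p < real c"
      then have "real k < real c" using kle by linarith
      then show "Suc k \<le> c" by simp
    next
      assume "Suc k \<le> c"
      then have "real k + 1 \<le> real c" by simp
      then show "real N * p < real c" using kle by linarith
    qed
    show ?thesis unfolding s c ..
  qed
  have P: "prob {x \<in> space M. Suc k \<le> card {i\<in>{1..N}. z i x}} = tailp q N (Suc k)"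
    by (rule tail_prob[OF assms(3)]) (use assms(4) in auto)
  have kp: "real k / real N \<le> p" using kle N0 by (simp add: divide_le_eq mult.commute)
  have mono: "ta (real k / real N) N (Suc k) \<le> tailp q N (Suc k)"
    unfolding ta_def
  proof (rule tailp_mono, intro ballI conjI)
    fix i assume i: "i \<in> {1..N}"
    show "0 \<le> real k / real N" by simp
    show "real k / real N \<le> q i" using kp pq[OF i] by linarith
    show "q i \<le> 1" using assms(5)[OF i] by simp
  qed
  have main: "1 / 4 < tailp q N (Suc k)"
  proof (cases "2 \<le> k")
    case True
    have "ta (real k / real (Suc k)) (Suc k) (Suc k) \<le> ta (real k / real N) N (Suc k)"
      by (rule G_mono) (use k1 kN in auto)
    moreover have "ta (real k / real (Suc k)) (Suc k) (Suc k) = (real k / real (Suc k)) ^ Suc k"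
      by (rule ta_diag)
    moreover have "8 / 27 \<le> (real k / real (Suc k)) ^ Suc k" by (rule r_bound[OF True])
    ultimately show ?thesis using mono by linarith
  next
    case False
    then have k1': "k = 1" using k1 by simp
    show ?thesis
    proof (cases "3 \<le> N")
      case True
      have "ta (real 1 / real 3) 3 (Suc 1) \<le> ta (real 1 / real N) N (Suc 1)"
        by (rule G_mono) (use True in auto)
      moreover have "ta (real 1 / real 3) 3 (Suc 1) = 7 / 27" using G3 by (simp add: numeral_2_eq_2)
      ultimately show ?thesis using mono k1' by simp
    next
      case False
      then have N2: "N = 2" using kN k1' by simp
      have t: "tailp q N (Suc k) = q 2 * q 1" unfolding N2 k1' by (simp add: numeral_eq_Suc)
      have h0: "p > 1 / real N" using assms(6) unfolding p_def .
      have h: "1 / 2 < p" using h0 N2 by simp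
      have "1 / 2 < q 1" "1 / 2 < q 2" using h pq[of 1] pq[of 2] N2 by auto
      then have "(1/2) * (1/2) < q 2 * q 1" by (intro mult_strict_mono) auto
      then show ?thesis unfolding t by simp
    qed
  qed
  show ?thesis using main P E unfolding p_def by simp
qed

end
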